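(* The joint policy $\boldsymbol{\pi}^{\text{API}}_{\text{push}}(\beta\mid\boldsymbol{\pi}_{\text{e}}^0)$ returned by the Alternating Policy Iteration (API) scheme started from initial encoder policy $\boldsymbol{\pi}_{\text{e}}^0$ does not always outperform the optimal periodic policy: there exist an instance $\langle\mathcal{S},\mathcal{A},\mathbf{P},r,\gamma,\beta\rangle$ and an initial encoder policy $\boldsymbol{\pi}_{\text{e}}^0$ such that $R_\beta^{\boldsymbol{\pi}^{\text{API}}_{\text{push}}(\beta\mid\boldsymbol{\pi}_{\text{e}}^0)}<R_\beta^{\boldsymbol{\pi}^*_{\text{per}}(\beta)}$.
   Context: Setting: finite state set $\mathcal{S}$, finite control action set $\mathcal{A}$, stochastic matrices $\mathbf{P}^a$ ($a\in\mathcal{A}$), reward $r_{s,s'}(a)$, discount $\gamma\in[0,1)$, communication cost $\beta>0$, initial state distribution. A Markov process evolves as $s_{t+1}\sim P^{a_t}_{s_t,\cdot}$; at each time $t$ either $s_t$ is transmitted to the decoder ($c_t=1$) or not ($c_t=0$); the decoder chooses $a_t=\pi_{\text{d}}(\Delta_t,s_{t-\Delta_t})\in\mathcal{A}$, where $\Delta_t\le T_{\max}$ is the time since the last transmission and $s_{t-\Delta_t}$ the last transmitted state; reward $r_t=r_{s_t,s_{t+1}}(a_t)$. For a joint policy $\boldsymbol{\pi}$, $R_\beta^{\boldsymbol{\pi}}=\mathbb{E}\big[\sum_t\gamma^t(r_t-\beta c_t)\big]$. Periodic policies transmit every $\tau$ steps for a fixed $\tau\in\{0,\dots,T_{\max}\}$;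 $\boldsymbol{\pi}^*_{\text{per}}(\beta)$ maximizes $R_\beta$ over $\tau$ and $\boldsymbol{\pi}_{\text{d}}$. Push-based policies: an encoder observing $s_t$ decides $c_t=\pi_{\text{e}}(s_t,\Delta_t,s_{t-\Delta_t})$. API scheme: from an initial encoder policy $\boldsymbol{\pi}_{\text{e}}^0$, alternately compute the decoder's best response to the current encoder policy (policy iteration over $\langle\Delta,s\rangle$, with the decoder's belief computed by Bayesian updating that conditions on the encoder not having transmitted) and the encoder's best response to the current decoder policy (policy iteration on the MDP with state $\langle s_t,\Delta_t,s_{t-\Delta_t}\rangle$), until neither policy changes; the output is $\boldsymbol{\pi}^{\text{API}}_{\text{push}}(\beta\mid\boldsymbol{\pi}_{\text{e}}^0)$. *)

theory Defs
  imports Complex_Main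
begin

record inst =
  St   :: "nat set"
  Ac   :: "nat set"
  Pr   :: "nat \<Rightarrow> nat \<Rightarrow> nat \<Rightarrow> real"  (* Pr I a s s' = P^a_{s,s'} *)
  rew  :: "nat \<Rightarrow> nat \<Rightarrow> nat \<Rightarrow> real"  (* rew I s s' a = r_{s,s'}(a) *)
  gam  :: real
  cost :: real
  mu0  :: "nat \<Rightarrow> real"
  Tmax :: nat

definition valid_inst :: "inst \<Rightarrow> bool" where
  "valid_inst I \<longleftrightarrow>
     finite (St I) \<and> St I \<noteq> {} \<and> finite (Ac I) \<and> Ac I \<noteq> {} \<and>
     (\<forall>a\<in>Ac I. \<forall>s\<in>St I. (\<forall>s'. 0 \<le> Pr I a s s') \<and> (\<Sum>s'\<in>St I. Pr I a s s') = 1) \<and>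
     0 \<le> gam I \<and> gam I < 1 \<and> 0 < cost I \<and>
     (\<forall>s. 0 \<le> mu0 I s) \<and> (\<Sum>s\<in>St I. mu0 I s) = 1"

(* Encoder policy: c_t = e s_t delta z, where s_t is the current state, delta = Delta_{t-1}+1
   is the age the decoder's information would have if nothing is sent at time t, and
   z = s_{t-1-Delta_{t-1}} is the last transmitted state.  True = transmit. *)
type_synonym enc = "nat \<Rightarrow> nat \<Rightarrow> nat \<Rightarrow> bool"
(* Decoder policy: a_t = d Delta_t s_{t-Delta_t}. *)
type_synonym dec = "nat \<Rightarrow> nat \<Rightarrow> nat"

definition X :: "inst \<Rightarrow> (nat \<times> nat \<times> nat) set" where
  "X I = St I \<times> {1..Tmax I + 1} \<times> St I"

(* Transmission is forced when otherwise Delta_t would exceed T_max. *)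
definition txc :: "inst \<Rightarrow> nat \<Rightarrow> bool \<Rightarrow> bool" where
  "txc I delta c \<longleftrightarrow> Tmax I < delta \<or> c"

definition age :: "inst \<Rightarrow> nat \<Rightarrow> bool \<Rightarrow> nat" where
  "age I delta c = (if txc I delta c then 0 else delta)"

definition last :: "inst \<Rightarrow> nat \<Rightarrow> nat \<Rightarrow> nat \<Rightarrow> bool \<Rightarrow> nat" where
  "last I s delta z c = (if txc I delta c then s else z)"

definition actn :: "inst \<Rightarrow> dec \<Rightarrow> nat \<Rightarrow> nat \<Rightarrow> nat \<Rightarrow> bool \<Rightarrow> nat" where
  "actn I d s delta z c = d (age I delta c) (last I s delta z c)"

definition gstage :: "inst \<Rightarrow> dec \<Rightarrow> nat \<times> nat \<times> nat \<Rightarrow> bool \<Rightarrow> real" where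
  "gstage I d x c = (case x of (s, delta, z) \<Rightarrow>
     (\<Sum>s'\<in>St I. Pr I (actn I d s delta z c) s s' * rew I s s' (actn I d s delta z c))
     - (if txc I delta c then cost I else 0))"

definition kern :: "inst \<Rightarrow> dec \<Rightarrow> nat \<times> nat \<times> nat \<Rightarrow> bool \<Rightarrow> nat \<times> nat \<times> nat \<Rightarrow> real" where
  "kern I d x c y = (case x of (s, delta, z) \<Rightarrow> case y of (s', delta', z') \<Rightarrow>
     (if delta' = age I delta c + 1 \<and> z' = last I s delta z c
      then Pr I (actn I d s delta z c) s s' else 0))"

(* distribution of the extended state at time t under the joint policy (e, d);
   at time 0 the age is T_max+1, which forces the initial transmission *)
fun dist :: "inst \<Rightarrow> enc \<Rightarrow> dec \<Rightarrow> nat \<Rightarrow> nat \<times> nat \<times> nat \<Rightarrow> real" where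
  "dist I e d 0 y = (case y of (s, delta, z) \<Rightarrow>
      (if delta = Tmax I + 1 \<and> z = s then mu0 I s else 0))"
| "dist I e d (Suc t) y =
      (\<Sum>x\<in>X I. dist I e d t x * kern I d x (case x of (s, delta, z) \<Rightarrow> e s delta z) y)"

definition Ret :: "inst \<Rightarrow> enc \<Rightarrow> dec \<Rightarrow> real" where
  "Ret I e d = (\<Sum>t. gam I ^ t *
     (\<Sum>x\<in>X I. dist I e d t x * gstage I d x (case x of (s, delta, z) \<Rightarrow> e s delta z)))"

definition valid_dec :: "inst \<Rightarrow> dec \<Rightarrow> bool" where
  "valid_dec I d \<longleftrightarrow> (\<forall>D\<le>Tmax I. \<forall>z\<in>St I. d D z \<in> Ac I)"

definition enc_eq :: "inst \<Rightarrow> enc \<Rightarrow> enc \<Rightarrow> bool" where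
  "enc_eq I e e' \<longleftrightarrow> (\<forall>s\<in>St I. \<forall>delta\<in>{1..Tmax I}. \<forall>z\<in>St I. e s delta z = e' s delta z)"

definition dec_eq :: "inst \<Rightarrow> dec \<Rightarrow> dec \<Rightarrow> bool" where
  "dec_eq I d d' \<longleftrightarrow> (\<forall>D\<le>Tmax I. \<forall>z\<in>St I. d D z = d' D z)"

definition dec_br :: "inst \<Rightarrow> enc \<Rightarrow> dec \<Rightarrow> bool" where
  "dec_br I e d \<longleftrightarrow> valid_dec I d \<and> (\<forall>d'. valid_dec I d' \<longrightarrow> Ret I e d' \<le> Ret I e d)"

definition qv :: "inst \<Rightarrow> dec \<Rightarrow> (nat \<times> nat \<times> nat \<Rightarrow> real) \<Rightarrow> nat \<times> nat \<times> nat \<Rightarrow> bool \<Rightarrow> real" where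
  "qv I d V x c = gstage I d x c + gam I * (\<Sum>y\<in>X I. kern I d x c y * V y)"

(* Encoder best response to decoder d: an optimal policy of the encoder MDP, i.e. greedy
   w.r.t. the optimal value function (the fixed point of the Bellman optimality operator),
   which is what policy iteration returns. *)
definition enc_br :: "inst \<Rightarrow> dec \<Rightarrow> enc \<Rightarrow> bool" where
  "enc_br I d e \<longleftrightarrow> (\<exists>V. (\<forall>x\<in>X I. V x = max (qv I d V x True) (qv I d V x False)) \<and>
                        (\<forall>x\<in>X I. qv I d V x (case x of (s, delta, z) \<Rightarrow> e s delta z) = V x))"

(* Alternating Policy Iteration started from e0: rounds k = 0,1,...: d_k is a decoder best
   response to e_k, then e_{k+1} is an encoder best response to d_k; the scheme stops after
   the first round n \<ge> 1 in which neither policy changed; output (e_{n+1}, d_n). *)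
definition api_output :: "inst \<Rightarrow> enc \<Rightarrow> enc \<Rightarrow> dec \<Rightarrow> bool" where
  "api_output I e0 e d \<longleftrightarrow>
     (\<exists>es ds n. es 0 = e0 \<and> 1 \<le> n \<and>
        (\<forall>k\<le>n. dec_br I (es k) (ds k) \<and> enc_br I (ds k) (es (Suc k))) \<and>
        (\<forall>k. 1 \<le> k \<and> k < n \<longrightarrow> \<not> (dec_eq I (ds k) (ds (k - 1)) \<and> enc_eq I (es (Suc k)) (es k))) \<and>
        dec_eq I (ds n) (ds (n - 1)) \<and> enc_eq I (es (Suc n)) (es n) \<and>
        e = es (Suc n) \<and> d = ds n)"

(* Periodic encoder with period tau: transmit exactly when the age would exceed tau,
   so Delta_t = t mod (tau+1). *)
definition per_enc :: "nat \<Rightarrow> enc" where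
  "per_enc tau = (\<lambda>s delta z. tau < delta)"

definition per_opt :: "inst \<Rightarrow> nat \<Rightarrow> dec \<Rightarrow> bool" where
  "per_opt I tau d \<longleftrightarrow> tau \<le> Tmax I \<and> valid_dec I d \<and>
     (\<forall>tau' d'. tau' \<le> Tmax I \<and> valid_dec I d' \<longrightarrow> Ret I (per_enc tau') d' \<le> Ret I (per_enc tau) d)"

end

theory Submission
  imports Defs
begin


lemma nu_sums:
  fixes D :: "nat \<Rightarrow> 'a \<Rightarrow> real" and K :: "'a \<Rightarrow> 'a \<Rightarrow> real"
    and g nu :: "'a \<Rightarrow> real" and c :: real
  assumes fin: "finite A"
    and D: "\<And>t y. D (Suc t) y = (\<Sum>x\<in>A. D t x * K x y)"
    and Kn: "\<And>x y. x \<in> A \<Longrightarrow> y \<in> A \<Longrightarrow> 0 \<le> K x y"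
    and Ks: "\<And>x. x \<in> A \<Longrightarrow> (\<Sum>y\<in>A. K x y) = 1"
    and nun: "\<And>x. x \<in> A \<Longrightarrow> 0 \<le> nu x"
    and nue: "\<And>y. y \<in> A \<Longrightarrow> nu y = D 0 y + c * (\<Sum>x\<in>A. nu x * K x y)"
    and c0: "0 \<le> c" and c1: "c < 1"
  shows "(\<lambda>t. c ^ t * (\<Sum>x\<in>A. D t x * g x)) sums (\<Sum>x\<in>A. nu x * g x)"
proof -
  define mu where "mu = rec_nat nu (\<lambda>_ m y. \<Sum>x\<in>A. m x * K x y)"
  have mu0: "mu 0 = nu" by (simp add: mu_def)
  have muS: "\<And>n y. mu (Suc n) y = (\<Sum>x\<in>A. mu n x * K x y)" by (simp add: mu_def)
  have step: "\<And>y. y \<in> A \<Longrightarrow> mu N y = D N y + c * mu (Suc N) y" for N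
  proof (induction N)
    case 0
    then show ?case using nue[OF 0] by (simp add: mu0 muS)
  next
    case (Suc N)
    have "mu (Suc N) y = (\<Sum>x\<in>A. mu N x * K x y)" by (rule muS)
    also have "\<dots> = (\<Sum>x\<in>A. (D N x + c * mu (Suc N) x) * K x y)"
      using Suc.IH by (intro sum.cong) auto
    also have "\<dots> = (\<Sum>x\<in>A. D N x * K x y) + c * (\<Sum>x\<in>A. mu (Suc N) x * K x y)"
      by (simp add: distrib_right sum.distrib sum_distrib_left mult.assoc)
    also have "\<dots> = D (Suc N) y + c * mu (Suc (Suc N)) y" by (simp add: D muS)
    finally show ?case .
  qed
  have part: "(\<Sum>x\<in>A. nu x * g x) = (\<Sum>t<N. c ^ t * (\<Sum>x\<in>A. D t x * g x)) + c ^ N * (\<Sum>x\<in>A. mu N x * g x)" for N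
  proof (induction N)
    case 0
    show ?case by (simp add: mu0)
  next
    case (Suc N)
    have "(\<Sum>x\<in>A. mu N x * g x) = (\<Sum>x\<in>A. (D N x + c * mu (Suc N) x) * g x)"
    proof (rule sum.cong[OF refl])
      fix x assume x: "x \<in> A"
      have "mu N x = D N x + c * mu (Suc N) x" using step[OF x] .
      then show "mu N x * g x = (D N x + c * mu (Suc N) x) * g x" by simp
    qed
    also have "\<dots> = (\<Sum>x\<in>A. D N x * g x) + c * (\<Sum>x\<in>A. mu (Suc N) x * g x)"
      by (simp add: distrib_right sum.distrib sum_distrib_left mult.assoc)
    finally show ?case using Suc.IH by (simp add: algebra_simps)
  qed
  have nonneg: "\<And>x. x \<in> A \<Longrightarrow> 0 \<le> mu N x" for N
  proof (induction N)
    case 0 then show ?case by (simp add: mu0 nun)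
  next
    case (Suc N) then show ?case by (simp add: muS Kn sum_nonneg)
  qed
  have mass: "(\<Sum>x\<in>A. mu N x) = (\<Sum>x\<in>A. nu x)" for N
  proof (induction N)
    case 0 then show ?case by (simp add: mu0)
  next
    case (Suc N)
    have "(\<Sum>y\<in>A. mu (Suc N) y) = (\<Sum>y\<in>A. \<Sum>x\<in>A. mu N x * K x y)" by (simp add: muS)
    also have "\<dots> = (\<Sum>x\<in>A. \<Sum>y\<in>A. mu N x * K x y)" by (rule sum.swap)
    also have "\<dots> = (\<Sum>x\<in>A. mu N x * (\<Sum>y\<in>A. K x y))" by (simp add: sum_distrib_left)
    also have "\<dots> = (\<Sum>x\<in>A. mu N x)" using Ks by (intro sum.cong) auto
    finally show ?case using Suc.IH by simp
  qed
  define B where "B = (\<Sum>x\<in>A. \<bar>g x\<bar>) * (\<Sum>x\<in>A. nu x)"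
  have bound: "\<bar>\<Sum>x\<in>A. mu N x * g x\<bar> \<le> B" for N
  proof -
    have "\<bar>\<Sum>x\<in>A. mu N x * g x\<bar> \<le> (\<Sum>x\<in>A. \<bar>mu N x * g x\<bar>)" by (rule sum_abs)
    also have "\<dots> \<le> (\<Sum>x\<in>A. mu N x * (\<Sum>x\<in>A. \<bar>g x\<bar>))"
    proof (intro sum_mono)
      fix x assume x: "x \<in> A"
      have "\<bar>g x\<bar> \<le> (\<Sum>x\<in>A. \<bar>g x\<bar>)" using x fin by (intro member_le_sum) auto
      then show "\<bar>mu N x * g x\<bar> \<le> mu N x * (\<Sum>x\<in>A. \<bar>g x\<bar>)"
        using nonneg[OF x] by (simp add: abs_mult mult_left_mono)
    qed
    also have "\<dots> = B" by (simp add: B_def mass sum_distrib_right[symmetric] mult.commute)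
    finally show ?thesis .
  qed
  have cN: "(\<lambda>N. c ^ N) \<longlonglongrightarrow> 0" using c0 c1 by (intro LIMSEQ_power_zero) simp
  have r0: "(\<lambda>N. c ^ N * (\<Sum>x\<in>A. mu N x * g x)) \<longlonglongrightarrow> 0"
  proof (rule tendsto_sandwich)
    show "\<forall>\<^sub>F N in sequentially. - (c ^ N * B) \<le> c ^ N * (\<Sum>x\<in>A. mu N x * g x)"
    proof (intro always_eventually allI)
      fix N
      have "- B \<le> (\<Sum>x\<in>A. mu N x * g x)" using bound[of N] by linarith
      then have "c ^ N * (- B) \<le> c ^ N * (\<Sum>x\<in>A. mu N x * g x)" using c0 by (intro mult_left_mono) auto
      then show "- (c ^ N * B) \<le> c ^ N * (\<Sum>x\<in>A. mu N x * g x)" by simp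
    qed
    show "\<forall>\<^sub>F N in sequentially. c ^ N * (\<Sum>x\<in>A. mu N x * g x) \<le> c ^ N * B"
    proof (intro always_eventually allI)
      fix N
      have "(\<Sum>x\<in>A. mu N x * g x) \<le> B" using bound[of N] by linarith
      then show "c ^ N * (\<Sum>x\<in>A. mu N x * g x) \<le> c ^ N * B" using c0 by (intro mult_left_mono) auto
    qed
    show "(\<lambda>N. - (c ^ N * B)) \<longlonglongrightarrow> 0" using tendsto_minus[OF tendsto_mult_left_zero[OF cN, of B]] by simp
    show "(\<lambda>N. c ^ N * B) \<longlonglongrightarrow> 0" using tendsto_mult_left_zero[OF cN, of B] by simp
  qed
  have "(\<lambda>N. (\<Sum>x\<in>A. nu x * g x) - c ^ N * (\<Sum>x\<in>A. mu N x * g x)) \<longlonglongrightarrow> (\<Sum>x\<in>A. nu x * g x) - 0"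
    by (intro tendsto_diff tendsto_const r0)
  moreover have "(\<lambda>N. \<Sum>t<N. c ^ t * (\<Sum>x\<in>A. D t x * g x)) = (\<lambda>N. (\<Sum>x\<in>A. nu x * g x) - c ^ N * (\<Sum>x\<in>A. mu N x * g x))"
  proof (rule ext)
    fix N show "(\<Sum>t<N. c ^ t * (\<Sum>x\<in>A. D t x * g x)) = (\<Sum>x\<in>A. nu x * g x) - c ^ N * (\<Sum>x\<in>A. mu N x * g x)"
      using part[of N] by linarith
  qed
  ultimately have "(\<lambda>N. \<Sum>t<N. c ^ t * (\<Sum>x\<in>A. D t x * g x)) \<longlonglongrightarrow> (\<Sum>x\<in>A. nu x * g x)"
    by simp
  then show ?thesis by (simp add: sums_def)
qed

lemma contraction_unique:
  fixes q :: "('a \<Rightarrow> real) \<Rightarrow> 'a \<Rightarrow> bool \<Rightarrow> real" and c :: real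
  assumes fin: "finite A" and ne: "A \<noteq> {}"
    and qd: "\<And>V W x b. x \<in> A \<Longrightarrow> q V x b - q W x b = c * (\<Sum>y\<in>A. K x b y * (V y - W y))"
    and Kn: "\<And>x b y. x \<in> A \<Longrightarrow> y \<in> A \<Longrightarrow> 0 \<le> K x b y"
    and Ks: "\<And>x b. x \<in> A \<Longrightarrow> (\<Sum>y\<in>A. K x b y) = 1"
    and c0: "0 \<le> c" and c1: "c < 1"
    and V: "\<And>x. x \<in> A \<Longrightarrow> V x = max (q V x True) (q V x False)"
    and W: "\<And>x. x \<in> A \<Longrightarrow> W x = max (q W x True) (q W x False)"
  shows "\<And>x. x \<in> A \<Longrightarrow> V x = W x"
proof -
  define M where "M = Max ((\<lambda>x. \<bar>V x - W x\<bar>) ` A)"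
  have leM: "\<And>x. x \<in> A \<Longrightarrow> \<bar>V x - W x\<bar> \<le> M" unfolding M_def using fin by (intro Max_ge) auto
  have "M \<in> (\<lambda>x. \<bar>V x - W x\<bar>) ` A" unfolding M_def using fin ne by (intro Max_in) auto
  then obtain x0 where x0: "x0 \<in> A" "M = \<bar>V x0 - W x0\<bar>" by auto
  have qb: "\<bar>q V x b - q W x b\<bar> \<le> c * M" if x: "x \<in> A" for x b
  proof -
    have "\<bar>\<Sum>y\<in>A. K x b y * (V y - W y)\<bar> \<le> (\<Sum>y\<in>A. \<bar>K x b y * (V y - W y)\<bar>)" by (rule sum_abs)
    also have "\<dots> \<le> (\<Sum>y\<in>A. K x b y * M)"
      using Kn[OF x] leM by (intro sum_mono) (simp add: abs_mult mult_left_mono)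
    also have "\<dots> = M" using Ks[OF x] by (simp add: sum_distrib_right[symmetric])
    finally have "\<bar>\<Sum>y\<in>A. K x b y * (V y - W y)\<bar> \<le> M" .
    then show ?thesis using qd[OF x, where V=V and W=W and b=b] c0 by (simp add: abs_mult mult_left_mono)
  qed
  have "M \<le> c * M"
  proof -
    have a: "\<bar>q V x0 True - q W x0 True\<bar> \<le> c * M" and b: "\<bar>q V x0 False - q W x0 False\<bar> \<le> c * M"
      using qb x0 by auto
    have "\<bar>max (q V x0 True) (q V x0 False) - max (q W x0 True) (q W x0 False)\<bar> \<le> c * M"
      using a b by (simp add: max_def abs_le_iff) linarith?
    then show ?thesis using x0 V[OF x0(1)] W[OF x0(1)] by simp
  qed
  moreover have "0 \<le> M" using x0 by simp
  ultimately have "M = 0" using c1 by (metis mult_le_cancel_right1 not_le order.antisym mult.commute less_le_trans)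
  then show "\<And>x. x \<in> A \<Longrightarrow> V x = W x" using leM by fastforce
qed



definition Rf :: "nat \<Rightarrow> nat \<Rightarrow> real" where
  "Rf s a = (if s = 0 then (if a = 0 then 2 else 0) else (if a = 0 then 3 else 4))"

definition I0 :: inst where
  "I0 = \<lparr>St = {0,1}, Ac = {0,1}, Pr = (\<lambda>a s s'. 1/2), rew = (\<lambda>s s' a. Rf s a),
         gam = 4/5, cost = 2, mu0 = (\<lambda>s. 1/2), Tmax = 1\<rparr>"

lemma I0_simps [simp]: "St I0 = {0,1}" "Ac I0 = {0,1}" "Pr I0 a s s' = 1/2" "rew I0 s s' a = Rf s a"
  "gam I0 = 4/5" "cost I0 = 2" "mu0 I0 s = 1/2" "Tmax I0 = 1"
  by (simp_all add: I0_def)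

lemma valid_I0: "valid_inst I0"
  by (simp add: valid_inst_def)

lemma X_I0: "X I0 = {(0,1,0),(0,1,1),(0,2,0),(0,2,1),(1,1,0),(1,1,1),(1,2,0),(1,2,1)}"
proof -
  have a: "{1..1+1::nat} = {1,2}" by auto
  show ?thesis unfolding X_def I0_simps a by blast
qed

lemma sum_X: "(\<Sum>x\<in>X I0. f x) = f (0,1,0) + f (0,1,1) + f (0,2,0) + f (0,2,1) + f (1,1,0) + f (1,1,1) + f (1,2,0) + f (1,2,1)"
  by (simp add: X_I0 add.assoc)

lemma X_cases: "x \<in> X I0 \<Longrightarrow> (P (0,1,0) \<and> P (0,1,1) \<and> P (0,2,0) \<and> P (0,2,1) \<and> P (1,1,0) \<and> P (1,1,1) \<and> P (1,2,0) \<and> P (1,2,1)) \<Longrightarrow> P x"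
  by (auto simp: X_I0)

lemma kern_nonneg: "0 \<le> kern I0 d x c y"
  by (cases x; cases y) (simp add: kern_def)

lemma kern_sum: "x \<in> X I0 \<Longrightarrow> (\<Sum>y\<in>X I0. kern I0 d x c y) = 1"
  unfolding X_I0 by (auto simp: kern_def age_def last_def txc_def)

lemma Ret_nu:
  assumes nue: "\<And>y. y \<in> X I0 \<Longrightarrow> nu y = dist I0 e d 0 y + gam I0 * (\<Sum>x\<in>X I0. nu x * kern I0 d x (case x of (s, delta, z) \<Rightarrow> e s delta z) y)"
    and nun: "\<And>x. x \<in> X I0 \<Longrightarrow> 0 \<le> nu x"
  shows "Ret I0 e d = (\<Sum>x\<in>X I0. nu x * gstage I0 d x (case x of (s, delta, z) \<Rightarrow> e s delta z))"
proof -
  have "(\<lambda>t. gam I0 ^ t * (\<Sum>x\<in>X I0. dist I0 e d t x * gstage I0 d x (case x of (s, delta, z) \<Rightarrow> e s delta z)))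
        sums (\<Sum>x\<in>X I0. nu x * gstage I0 d x (case x of (s, delta, z) \<Rightarrow> e s delta z))"
  proof (rule nu_sums[where K="\<lambda>x y. kern I0 d x (case x of (s, delta, z) \<Rightarrow> e s delta z) y"])
    show "finite (X I0)" by (simp add: X_I0)
    show "\<And>t y. dist I0 e d (Suc t) y = (\<Sum>x\<in>X I0. dist I0 e d t x * kern I0 d x (case x of (s, delta, z) \<Rightarrow> e s delta z) y)"
      by simp
    show "\<And>x y. 0 \<le> kern I0 d x (case x of (s, delta, z) \<Rightarrow> e s delta z) y" by (rule kern_nonneg)
    show "\<And>x. x \<in> X I0 \<Longrightarrow> (\<Sum>y\<in>X I0. kern I0 d x (case x of (s, delta, z) \<Rightarrow> e s delta z) y) = 1"
      by (rule kern_sum)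
  qed (use nun nue in auto)
  then have "(\<Sum>x\<in>X I0. nu x * gstage I0 d x (case x of (s, delta, z) \<Rightarrow> e s delta z)) =
    (\<Sum>t. gam I0 ^ t * (\<Sum>x\<in>X I0. dist I0 e d t x * gstage I0 d x (case x of (s, delta, z) \<Rightarrow> e s delta z)))"
    by (rule sums_unique)
  then show ?thesis unfolding Ret_def by simp
qed

definition nuE0 :: "nat \<times> nat \<times> nat \<Rightarrow> real" where
  "nuE0 x = (if x = (0,1,0) then 5/7 else if x = (0,1,1) then 25/49 else if x = (0,2,0) then 15/14
     else if x = (0,2,1) then 10/49 else if x = (1,1,0) then 5/7 else if x = (1,1,1) then 25/49
     else if x = (1,2,0) then 4/7 else if x = (1,2,1) then 69/98 else 0)"

definition nuA :: "nat \<times> nat \<times> nat \<Rightarrow> real" where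
  "nuA x = (if x = (0,1,0) then 1 else if x = (0,1,1) then 1 else if x = (0,2,0) then 1/2
     else if x = (0,2,1) then 0 else if x = (1,1,0) then 1 else if x = (1,1,1) then 1
     else if x = (1,2,0) then 0 else if x = (1,2,1) then 1/2 else 0)"

definition nuN :: "nat \<times> nat \<times> nat \<Rightarrow> real" where
  "nuN x = (if x = (0,1,0) then 5/9 else if x = (0,1,1) then 5/9 else if x = (0,2,0) then 17/18
     else if x = (0,2,1) then 4/9 else if x = (1,1,0) then 5/9 else if x = (1,1,1) then 5/9
     else if x = (1,2,0) then 4/9 else if x = (1,2,1) then 17/18 else 0)"

lemma gstage_I0: "gstage I0 d (s, delta, z) c = Rf s (actn I0 d s delta z c) - (if txc I0 delta c then 2 else 0)"
  by (simp add: gstage_def)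


lemma Ret_E0:
  assumes e: "e 0 1 0 = False" "e 0 1 1 = True" "e 1 1 0 = False" "e 1 1 1 = False"
  shows "Ret I0 e d = 5/7 * (Rf 0 (d 1 0) + Rf 1 (d 1 0)) + 25/49 * Rf 1 (d 1 1) + (25/49+15/14+10/49) * (Rf 0 (d 0 0) - 2)
     + (4/7 + 69/98) * (Rf 1 (d 0 1) - 2)"
proof -
  have e': "e 0 (Suc 0) 0 = False" "e 0 (Suc 0) (Suc 0) = True" "e (Suc 0) (Suc 0) 0 = False" "e (Suc 0) (Suc 0) (Suc 0) = False"
    using e by simp_all
  have "Ret I0 e d = (\<Sum>x\<in>X I0. nuE0 x * gstage I0 d x (case x of (s, delta, z) \<Rightarrow> e s delta z))"
  proof (rule Ret_nu)
    fix y assume "y \<in> X I0"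
    then show "nuE0 y = dist I0 e d 0 y + gam I0 * (\<Sum>x\<in>X I0. nuE0 x * kern I0 d x (case x of (s, delta, z) \<Rightarrow> e s delta z) y)"
      by (rule X_cases[where P="\<lambda>y. nuE0 y = dist I0 e d 0 y + gam I0 * (\<Sum>x\<in>X I0. nuE0 x * kern I0 d x (case x of (s, delta, z) \<Rightarrow> e s delta z) y)"])
         (simp only: sum_X, simp add: e' nuE0_def kern_def age_def last_def txc_def)
  next
    fix x assume "x \<in> X I0"
    then show "0 \<le> nuE0 x" by (simp add: nuE0_def)
  qed
  also have "\<dots> = 5/7 * (Rf 0 (d 1 0) + Rf 1 (d 1 0)) + 25/49 * Rf 1 (d 1 1) + (25/49+15/14+10/49) * (Rf 0 (d 0 0) - 2)
     + (4/7 + 69/98) * (Rf 1 (d 0 1) - 2)"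
    unfolding sum_X by (simp add: e' nuE0_def gstage_I0 actn_def age_def last_def txc_def field_simps)
  finally show ?thesis .
qed

lemma Ret_A:
  fixes e :: enc assumes e: "e = per_enc 0"
  shows "Ret I0 e d = 5/2 * (Rf 0 (d 0 0) - 2) + 5/2 * (Rf 1 (d 0 1) - 2)"
proof -
  have e': "\<And>s dl z. e s dl z = (0 < dl)" by (simp add: e per_enc_def)
  have "Ret I0 e d = (\<Sum>x\<in>X I0. nuA x * gstage I0 d x (case x of (s, delta, z) \<Rightarrow> e s delta z))"
  proof (rule Ret_nu)
    fix y assume "y \<in> X I0"
    then show "nuA y = dist I0 e d 0 y + gam I0 * (\<Sum>x\<in>X I0. nuA x * kern I0 d x (case x of (s, delta, z) \<Rightarrow> e s delta z) y)"
      by (rule X_cases[where P="\<lambda>y. nuA y = dist I0 e d 0 y + gam I0 * (\<Sum>x\<in>X I0. nuA x * kern I0 d x (case x of (s, delta, z) \<Rightarrow> e s delta z) y)"])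
         (simp only: sum_X, simp add: e' nuA_def kern_def age_def last_def txc_def)
  next
    fix x assume "x \<in> X I0"
    then show "0 \<le> nuA x" by (simp add: nuA_def)
  qed
  also have "\<dots> = 5/2 * (Rf 0 (d 0 0) - 2) + 5/2 * (Rf 1 (d 0 1) - 2)"
    unfolding sum_X by (simp add: e' nuA_def gstage_I0 actn_def age_def last_def txc_def field_simps)
  finally show ?thesis .
qed

lemma Ret_N:
  fixes e :: enc assumes e: "e = per_enc 1"
  shows "Ret I0 e d = 5/9 * (Rf 0 (d 1 0) + Rf 1 (d 1 0)) + 5/9 * (Rf 0 (d 1 1) + Rf 1 (d 1 1)) + 25/18 * (Rf 0 (d 0 0) - 2)
     + 25/18 * (Rf 1 (d 0 1) - 2)"
proof -
  have e': "\<And>s dl z. e s dl z = (1 < dl)" by (simp add: e per_enc_def)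
  have "Ret I0 e d = (\<Sum>x\<in>X I0. nuN x * gstage I0 d x (case x of (s, delta, z) \<Rightarrow> e s delta z))"
  proof (rule Ret_nu)
    fix y assume "y \<in> X I0"
    then show "nuN y = dist I0 e d 0 y + gam I0 * (\<Sum>x\<in>X I0. nuN x * kern I0 d x (case x of (s, delta, z) \<Rightarrow> e s delta z) y)"
      by (rule X_cases[where P="\<lambda>y. nuN y = dist I0 e d 0 y + gam I0 * (\<Sum>x\<in>X I0. nuN x * kern I0 d x (case x of (s, delta, z) \<Rightarrow> e s delta z) y)"])
         (simp only: sum_X, simp add: e' nuN_def kern_def age_def last_def txc_def)
  next
    fix x assume "x \<in> X I0"
    then show "0 \<le> nuN x" by (simp add: nuN_def)
  qed
  also have "\<dots> = 5/9 * (Rf 0 (d 1 0) + Rf 1 (d 1 0)) + 5/9 * (Rf 0 (d 1 1) + Rf 1 (d 1 1)) + 25/18 * (Rf 0 (d 0 0) - 2)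
     + 25/18 * (Rf 1 (d 0 1) - 2)"
    unfolding sum_X by (simp add: e' nuN_def gstage_I0 actn_def age_def last_def txc_def field_simps)
  finally show ?thesis .
qed


definition eprops :: "enc \<Rightarrow> bool" where
  "eprops e \<longleftrightarrow> e 0 1 0 = False \<and> e 0 1 1 = True \<and> e 1 1 0 = False \<and> e 1 1 1 = False"

definition dprops :: "dec \<Rightarrow> bool" where
  "dprops d \<longleftrightarrow> d 0 0 = 0 \<and> d 0 1 \<noteq> 0 \<and> d 1 0 = 0 \<and> d 1 1 \<noteq> 0"

definition E0 :: enc where "E0 = (\<lambda>s dl z. s = 0 \<and> z = 1)"
definition dstar :: dec where "dstar = (\<lambda>D z. if z = 0 then 0 else 1)"
definition dper :: dec where "dper = (\<lambda>D z. if D = 0 \<and> z = 1 then 1 else 0)"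

lemma eprops_E0: "eprops E0" by (simp add: eprops_def E0_def)
lemma dprops_dstar: "dprops dstar" by (simp add: dprops_def dstar_def)
lemma valid_dstar: "valid_dec I0 dstar" by (simp add: valid_dec_def dstar_def)
lemma valid_dp: "valid_dec I0 dper" by (simp add: valid_dec_def dper_def)

lemma E0_expr_le:
  "5/7 * (Rf 0 (d 1 0) + Rf 1 (d 1 0)) + 25/49 * Rf 1 (d 1 1) + (25/49+15/14+10/49) * (Rf 0 (d 0 0) - 2)
     + (4/7 + 69/98) * (Rf 1 (d 0 1) - 2) \<le> (400/49::real)"
  by (cases "d 1 0 = 0"; cases "d 1 1 = 0"; cases "d 0 0 = 0"; cases "d 0 1 = 0") (simp_all add: Rf_def)

lemma E0_expr_eq:
  "5/7 * (Rf 0 (d 1 0) + Rf 1 (d 1 0)) + 25/49 * Rf 1 (d 1 1) + (25/49+15/14+10/49) * (Rf 0 (d 0 0) - 2)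
     + (4/7 + 69/98) * (Rf 1 (d 0 1) - 2) \<ge> (400/49::real) \<Longrightarrow> dprops d"
  unfolding dprops_def
  by (cases "d 1 0 = 0"; cases "d 1 1 = 0"; cases "d 0 0 = 0"; cases "d 0 1 = 0") (simp_all add: Rf_def)

lemma Ret_E0_le: "eprops e \<Longrightarrow> Ret I0 e d \<le> 400/49"
  unfolding eprops_def using E0_expr_le[of d] by (subst Ret_E0) auto

lemma Ret_E0_dstar: "eprops e \<Longrightarrow> Ret I0 e dstar = 400/49"
  unfolding eprops_def by (subst Ret_E0) (auto simp: dstar_def Rf_def)

lemma dec_br_E0: "eprops e \<Longrightarrow> dec_br I0 e d \<Longrightarrow> dprops d"
proof -
  assume e: "eprops e" and br: "dec_br I0 e d"
  have "Ret I0 e dstar \<le> Ret I0 e d" using br valid_dstar by (simp add: dec_br_def)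
  then have "400/49 \<le> Ret I0 e d" using Ret_E0_dstar[OF e] by simp
  then show "dprops d" using e unfolding eprops_def by (subst (asm) Ret_E0) (auto intro: E0_expr_eq)
qed

lemma dec_br_E0_dstar: "eprops e \<Longrightarrow> dec_br I0 e dstar"
  unfolding dec_br_def
proof (intro conjI allI impI valid_dstar)
  fix d' assume e: "eprops e"
  show "Ret I0 e d' \<le> Ret I0 e dstar" using Ret_E0_le[OF e, of d'] Ret_E0_dstar[OF e] by simp
qed

lemma Ret_A_le: "Ret I0 (per_enc 0) d \<le> 5"
  by (subst Ret_A[OF refl]) (cases "d 0 0 = 0"; cases "d 0 1 = 0"; simp add: Rf_def)

lemma Ret_N_le: "Ret I0 (per_enc 1) d \<le> 25/3"
  by (subst Ret_N[OF refl]) (cases "d 1 0 = 0"; cases "d 1 1 = 0"; cases "d 0 0 = 0"; cases "d 0 1 = 0"; simp add: Rf_def)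

lemma Ret_N_dp: "Ret I0 (per_enc 1) dper = 25/3"
  by (subst Ret_N[OF refl]) (simp add: Rf_def dper_def)

lemma per_opt_dp: "per_opt I0 1 dper"
  unfolding per_opt_def
proof (intro conjI allI impI)
  fix tau' d' assume a: "tau' \<le> Tmax I0 \<and> valid_dec I0 d'"
  then have "tau' = 0 \<or> tau' = 1" by auto
  then show "Ret I0 (per_enc tau') d' \<le> Ret I0 (per_enc 1) dper"
    using Ret_A_le[of d'] Ret_N_le[of d'] Ret_N_dp by auto
qed (simp_all add: valid_dp)

definition Vs :: "nat \<times> nat \<times> nat \<Rightarrow> real" where
  "Vs x = (if x = (0,1,0) then 418/49 else if x = (0,1,1) then 354/49 else if x = (0,2,0) then 354/49
     else if x = (0,2,1) then 354/49 else if x = (1,1,0) then 467/49 else if x = (1,1,1) then 516/49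
     else if x = (1,2,0) then 446/49 else if x = (1,2,1) then 446/49 else 0)"

lemma Rf_simps: "Rf s 0 = (if s = 0 then 2 else 3)" "a \<noteq> 0 \<Longrightarrow> Rf s a = (if s = 0 then 0 else 4)"
  by (simp_all add: Rf_def)

lemma qv_vals:
  assumes "dprops d"
  shows "qv I0 d Vs (0,1,0) True = 354/49" "qv I0 d Vs (0,1,0) False = 418/49"
    "qv I0 d Vs (0,1,1) True = 354/49" "qv I0 d Vs (0,1,1) False = 320/49"
    "qv I0 d Vs (0,2,z) c = 354/49"
    "qv I0 d Vs (1,1,0) True = 446/49" "qv I0 d Vs (1,1,0) False = 467/49"
    "qv I0 d Vs (1,1,1) True = 446/49" "qv I0 d Vs (1,1,1) False = 516/49"
    "qv I0 d Vs (1,2,z) c = 446/49"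
proof -
  have d: "d 0 0 = 0" "d 0 (Suc 0) \<noteq> 0" "d (Suc 0) 0 = 0" "d (Suc 0) (Suc 0) \<noteq> 0"
    using assms by (simp_all add: dprops_def)
  show "qv I0 d Vs (0,1,0) True = 354/49" "qv I0 d Vs (0,1,0) False = 418/49"
    "qv I0 d Vs (0,1,1) True = 354/49" "qv I0 d Vs (0,1,1) False = 320/49"
    "qv I0 d Vs (0,2,z) c = 354/49"
    "qv I0 d Vs (1,1,0) True = 446/49" "qv I0 d Vs (1,1,0) False = 467/49"
    "qv I0 d Vs (1,1,1) True = 446/49" "qv I0 d Vs (1,1,1) False = 516/49"
    "qv I0 d Vs (1,2,z) c = 446/49"
    unfolding qv_def sum_X
    by (simp_all add: d gstage_I0 kern_def actn_def age_def last_def txc_def Vs_def Rf_simps)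
qed

lemmas qv_vals' = qv_vals[unfolded One_nat_def]

lemma Bellman_Vs: "dprops d \<Longrightarrow> x \<in> X I0 \<Longrightarrow> Vs x = max (qv I0 d Vs x True) (qv I0 d Vs x False)"
  by (erule X_cases[where P="\<lambda>x. Vs x = max (qv I0 d Vs x True) (qv I0 d Vs x False)"])
     (simp add: qv_vals qv_vals' Vs_def)

lemma qv_diff: "qv I0 d V x b - qv I0 d W x b = 4/5 * (\<Sum>y\<in>X I0. kern I0 d x b y * (V y - W y))"
proof -
  have "(\<Sum>y\<in>X I0. kern I0 d x b y * (V y - W y)) = (\<Sum>y\<in>X I0. kern I0 d x b y * V y) - (\<Sum>y\<in>X I0. kern I0 d x b y * W y)"
    by (simp add: right_diff_distrib sum_subtractf)
  then show ?thesis unfolding qv_def by (simp add: right_diff_distrib)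
qed

lemma enc_br_unique:
  assumes dpr: "dprops d" and br: "enc_br I0 d e"
  shows "eprops e"
proof -
  obtain V where V: "\<And>x. x \<in> X I0 \<Longrightarrow> V x = max (qv I0 d V x True) (qv I0 d V x False)"
    and G: "\<And>x. x \<in> X I0 \<Longrightarrow> qv I0 d V x (case x of (s, delta, z) \<Rightarrow> e s delta z) = V x"
    using br unfolding enc_br_def by blast
  have VV: "\<And>x. x \<in> X I0 \<Longrightarrow> V x = Vs x"
  proof (rule contraction_unique[where q="qv I0 d" and K="\<lambda>x b y. kern I0 d x b y" and c="4/5" and A="X I0"])
    show "finite (X I0)" "X I0 \<noteq> {}" by (simp_all add: X_I0)
    show "\<And>V W x b. x \<in> X I0 \<Longrightarrow> qv I0 d V x b - qv I0 d W x b = 4/5 * (\<Sum>y\<in>X I0. kern I0 d x b y * (V y - W y))"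
      by (rule qv_diff)
    show "\<And>x b y. x \<in> X I0 \<Longrightarrow> y \<in> X I0 \<Longrightarrow> 0 \<le> kern I0 d x b y" by (rule kern_nonneg)
    show "\<And>x b. x \<in> X I0 \<Longrightarrow> (\<Sum>y\<in>X I0. kern I0 d x b y) = 1" by (rule kern_sum)
    show "\<And>x. x \<in> X I0 \<Longrightarrow> Vs x = max (qv I0 d Vs x True) (qv I0 d Vs x False)"
      using Bellman_Vs[OF dpr] .
  qed (use V in auto)
  have qq: "\<And>x b. qv I0 d V x b = qv I0 d Vs x b"
    unfolding qv_def using VV by (intro arg_cong2[where f="(+)"] refl arg_cong2[where f="(*)"] sum.cong) auto
  have mem: "(0,1,0) \<in> X I0" "(0,1,1) \<in> X I0" "(1,1,0) \<in> X I0" "(1,1,1) \<in> X I0" by (simp_all add: X_I0)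
  have g1: "qv I0 d Vs (0,1,0) (e 0 1 0) = 418/49" using G[OF mem(1)] VV[OF mem(1)] qq by (simp add: Vs_def)
  have g2: "qv I0 d Vs (0,1,1) (e 0 1 1) = 354/49" using G[OF mem(2)] VV[OF mem(2)] qq by (simp add: Vs_def)
  have g3: "qv I0 d Vs (1,1,0) (e 1 1 0) = 467/49" using G[OF mem(3)] VV[OF mem(3)] qq by (simp add: Vs_def)
  have g4: "qv I0 d Vs (1,1,1) (e 1 1 1) = 516/49" using G[OF mem(4)] VV[OF mem(4)] qq by (simp add: Vs_def)
  show ?thesis unfolding eprops_def
    using g1 g2 g3 g4 qv_vals[OF dpr] qv_vals'[OF dpr]
    by (cases "e 0 1 0"; cases "e 0 1 1"; cases "e 1 1 0"; cases "e 1 1 1") simp_all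
qed

lemma enc_br_dstar: "enc_br I0 dstar E0"
  unfolding enc_br_def
proof (intro exI[of _ Vs] conjI ballI)
  fix x assume x: "x \<in> X I0"
  show "Vs x = max (qv I0 dstar Vs x True) (qv I0 dstar Vs x False)" by (rule Bellman_Vs[OF dprops_dstar x])
  show "qv I0 dstar Vs x (case x of (s, delta, z) \<Rightarrow> E0 s delta z) = Vs x"
    using x by (rule X_cases[where P="\<lambda>x. qv I0 dstar Vs x (case x of (s, delta, z) \<Rightarrow> E0 s delta z) = Vs x"])
       (simp add: qv_vals[OF dprops_dstar] qv_vals'[OF dprops_dstar] Vs_def E0_def)
qed



lemma api_eprops:
  assumes "api_output I0 E0 e d" shows "eprops e"
proof -
  obtain es ds n where es0: "es 0 = E0" and n: "1 \<le> n"
    and br: "\<forall>k\<le>n. dec_br I0 (es k) (ds k) \<and> enc_br I0 (ds k) (es (Suc k))"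
    and ee: "e = es (Suc n)"
    using assms unfolding api_output_def by blast
  have "k \<le> Suc n \<Longrightarrow> eprops (es k)" for k
  proof (induction k)
    case 0 then show ?case using es0 eprops_E0 by simp
  next
    case (Suc k)
    then have k: "k \<le> n" by simp
    then have "eprops (es k)" using Suc.IH by simp
    moreover have "dec_br I0 (es k) (ds k)" "enc_br I0 (ds k) (es (Suc k))" using br k by auto
    ultimately show ?case using dec_br_E0 enc_br_unique by blast
  qed
  then show ?thesis using ee by simp
qed

theorem lemma3:
  shows "\<exists>(I::inst) (e0::enc). valid_inst I \<and>
           (\<exists>e d. api_output I e0 e d) \<and> (\<exists>tau dp. per_opt I tau dp) \<and>
           (\<forall>e d. api_output I e0 e d \<longrightarrow>
              (\<forall>tau dp. per_opt I tau dp \<longrightarrow> Ret I e d < Ret I (per_enc tau) dp))"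
proof -
  have h1: "valid_inst I0" by (rule valid_I0)
  have "api_output I0 E0 E0 dstar"
    unfolding api_output_def
    apply (rule exI[of _ "\<lambda>_. E0"], rule exI[of _ "\<lambda>_. dstar"], rule exI[of _ 1])
    using dec_br_E0_dstar[OF eprops_E0] enc_br_dstar by (simp add: dec_eq_def enc_eq_def)
  then have h2: "\<exists>e d. api_output I0 E0 e d" by blast
  have h3: "\<exists>tau dp. per_opt I0 tau dp" using per_opt_dp by blast
  have h4: "\<forall>e d. api_output I0 E0 e d \<longrightarrow>
              (\<forall>tau dp. per_opt I0 tau dp \<longrightarrow> Ret I0 e d < Ret I0 (per_enc tau) dp)"
  proof (intro allI impI)
    fix e d tau dp' assume a: "api_output I0 E0 e d" and p: "per_opt I0 tau dp'"
    have "Ret I0 e d \<le> 400/49" using Ret_E0_le[OF api_eprops[OF a]] .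
    moreover have "Ret I0 (per_enc 1) dper \<le> Ret I0 (per_enc tau) dp'"
      using p valid_dp unfolding per_opt_def by auto
    ultimately show "Ret I0 e d < Ret I0 (per_enc tau) dp'" using Ret_N_dp by simp
  qed
  show ?thesis
    apply (rule exI[of _ I0], rule exI[of _ E0])
    using h1 h2 h3 h4 by blast
qed


end
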